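(* Every monogenic ring of prime characteristic is finitely separable: if $a$ is an element of a ring with $pa=0$ for a prime $p$, then $\mathbb{Z}\langle a\rangle$ is finitely separable.
   Context: Rings are associative and not necessarily unital. $\mathbb{Z}\langle a\rangle=\{g(a): g\in\mathbb{Z}[x],\ g(0)=0\}$ is the subring generated by $a$. A ring $R$ is finitely separable if for every $r\in R$ and every subring $A\subseteq R$ with $r\notin A$ there exist a finite ring $F$ and a homomorphism $\varphi:R\to F$ with $\varphi(r)\notin\varphi(A)$. *)

theory Defs
  imports Main "HOL-Computational_Algebra.Primes"
begin

text \<open>Rings are associative, not necessarily unital: the ambient type class is
  the Isabelle class ring (associative multiplication, abelian additive group, no 1).\<close>

definition natmul :: "nat \<Rightarrow> 'a::ab_group_add \<Rightarrow> 'a" where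
  "natmul n x = (\<Sum>i<n. x)"

definition intmul :: "int \<Rightarrow> 'a::ab_group_add \<Rightarrow> 'a" where
  "intmul k x = (if 0 \<le> k then natmul (nat k) x else - natmul (nat (- k)) x)"

text \<open>ppow x k = x^(k+1), positive powers (no unit needed).\<close>
fun ppow :: "'a::semigroup_mult \<Rightarrow> nat \<Rightarrow> 'a" where
  "ppow x 0 = x"
| "ppow x (Suc k) = x * ppow x k"

text \<open>Z<a> = { g(a) : g in Z[x], g(0)=0 }, with g = sum_{k=1}^{n} c_k x^k.\<close>
definition gen_subring :: "'a::ring \<Rightarrow> 'a set" where
  "gen_subring a = {(\<Sum>k<n. intmul (c k) (ppow a k)) | c n. True}"

definition is_subring :: "'a::ring set \<Rightarrow> bool" where
  "is_subring A \<longleftrightarrow> 0 \<in> A \<and> (\<forall>x\<in>A. \<forall>y\<in>A. x - y \<in> A \<and> x * y \<in> A)"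

text \<open>A finite (associative, not necessarily unital) ring, given concretely by a
  finite carrier C of natural numbers and operations on it.  Every finite ring is
  isomorphic to one of this form.\<close>
definition finite_ring ::
  "nat set \<Rightarrow> (nat \<Rightarrow> nat \<Rightarrow> nat) \<Rightarrow> (nat \<Rightarrow> nat \<Rightarrow> nat) \<Rightarrow> nat \<Rightarrow> (nat \<Rightarrow> nat) \<Rightarrow> bool"
  where
  "finite_ring C ad mu z ng \<longleftrightarrow> finite C \<and> z \<in> C \<and>
     (\<forall>x\<in>C. \<forall>y\<in>C. ad x y \<in> C \<and> mu x y \<in> C) \<and> (\<forall>x\<in>C. ng x \<in> C) \<and>
     (\<forall>x\<in>C. \<forall>y\<in>C. \<forall>w\<in>C. ad (ad x y) w = ad x (ad y w)) \<and>
     (\<forall>x\<in>C. \<forall>y\<in>C. ad x y = ad y x) \<and>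
     (\<forall>x\<in>C. ad z x = x) \<and> (\<forall>x\<in>C. ad (ng x) x = z) \<and>
     (\<forall>x\<in>C. \<forall>y\<in>C. \<forall>w\<in>C. mu (mu x y) w = mu x (mu y w)) \<and>
     (\<forall>x\<in>C. \<forall>y\<in>C. \<forall>w\<in>C. mu x (ad y w) = ad (mu x y) (mu x w)) \<and>
     (\<forall>x\<in>C. \<forall>y\<in>C. \<forall>w\<in>C. mu (ad x y) w = ad (mu x w) (mu y w))"

definition ring_hom_into ::
  "('a::ring \<Rightarrow> nat) \<Rightarrow> 'a set \<Rightarrow> nat set \<Rightarrow> (nat \<Rightarrow> nat \<Rightarrow> nat) \<Rightarrow> (nat \<Rightarrow> nat \<Rightarrow> nat) \<Rightarrow> bool"
  where
  "ring_hom_into \<phi> R C ad mu \<longleftrightarrow> \<phi> ` R \<subseteq> C \<and>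
     (\<forall>x\<in>R. \<forall>y\<in>R. \<phi> (x + y) = ad (\<phi> x) (\<phi> y) \<and> \<phi> (x * y) = mu (\<phi> x) (\<phi> y))"

definition finitely_separable :: "'a::ring set \<Rightarrow> bool" where
  "finitely_separable R \<longleftrightarrow>
     (\<forall>r\<in>R. \<forall>A. is_subring A \<and> A \<subseteq> R \<and> r \<notin> A \<longrightarrow>
        (\<exists>C ad mu z ng \<phi>. finite_ring C ad mu z ng \<and> ring_hom_into \<phi> R C ad mu \<and>
           \<phi> r \<notin> \<phi> ` A))"

end

theory Submission imports Defs "HOL-Computational_Algebra.Polynomial" "HOL-Library.FuncSet"
begin


lemma natmul_0[simp]: "natmul 0 x = 0" by (simp add: natmul_def)
lemma natmul_Suc: "natmul (Suc n) x = x + natmul n x" by (simp add: natmul_def add.commute)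
lemma natmul_add_nat: "natmul (m+n) x = natmul m x + natmul n x"
  by (induct m) (auto simp: natmul_Suc add.assoc)
lemma natmul_add: "natmul n (x+y) = natmul n x + natmul n (y::'a::ab_group_add)"
  by (simp add: natmul_def sum.distrib)
lemma natmul_minus: "natmul n (-x) = - natmul n (x::'a::ab_group_add)"
  by (simp add: natmul_def sum_negf)
lemma natmul_zero[simp]: "natmul n (0::'a::ab_group_add) = 0"
  by (simp add: natmul_def)
lemma natmul_mult_left: "natmul n (x*y) = natmul n x * (y::'a::ring)"
  by (simp add: natmul_def sum_distrib_right)
lemma natmul_mult_right: "natmul n (x*y) = x * natmul n (y::'a::ring)"
  by (simp add: natmul_def sum_distrib_left)
lemma natmul_mult_nat: "natmul (m*n) x = natmul m (natmul n (x::'a::ab_group_add))"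
  by (induct m) (auto simp: natmul_Suc natmul_add_nat natmul_add)
lemma natmul_comm: "natmul m (natmul n (x::'a::ab_group_add)) = natmul n (natmul m x)"
  by (metis mult.commute natmul_mult_nat)

lemma intmul_alt: "intmul k x = natmul (nat k) x - natmul (nat (-k)) x"
  by (simp add: intmul_def)

lemma intmul_diff_nat: "intmul (int m - int n) x = natmul m x - natmul n (x::'a::ab_group_add)"
proof (cases "n \<le> m")
  case True
  then have e: "int m - int n = int (m - n)" by simp
  have s: "natmul m x = natmul (m-n) x + natmul n x"
    using True by (metis le_add_diff_inverse2 natmul_add_nat)
  have "intmul (int m - int n) x = natmul (m-n) x" unfolding e by (simp add: intmul_def)
  then show ?thesis unfolding s by simp
next
  case False
  then have e: "int m - int n = - int (n - m)" by simp
  have s: "natmul n x = natmul (n-m) x + natmul m x"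
    using False by (metis le_add_diff_inverse2 natmul_add_nat nat_le_linear)
  have h: "nat (- (- int (n - m))) = n - m" by simp
  have "intmul (int m - int n) x = - natmul (n-m) x" unfolding e using False h by (simp add: intmul_def)
  then show ?thesis unfolding s by simp
qed

lemma int_as_diff: obtains m n where "k = int m - int n"
proof (cases "k \<ge> 0")
  case True then show ?thesis using that[of "nat k" 0] by simp
next
  case False then show ?thesis using that[of 0 "nat (-k)"] by simp
qed

lemma intmul_add_int: "intmul (k+l) x = intmul k x + intmul l (x::'a::ab_group_add)"
proof -
  obtain m1 n1 where 1: "k = int m1 - int n1" by (rule int_as_diff)
  obtain m2 n2 where 2: "l = int m2 - int n2" by (rule int_as_diff)
  have "k + l = int (m1+m2) - int (n1+n2)" using 1 2 by simp
  then have "intmul (k+l) x = natmul (m1+m2) x - natmul (n1+n2) x" by (simp only: intmul_diff_nat)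
  moreover have "intmul k x = natmul m1 x - natmul n1 x" using 1 by (simp only: intmul_diff_nat)
  moreover have "intmul l x = natmul m2 x - natmul n2 x" using 2 by (simp only: intmul_diff_nat)
  moreover have "natmul (m1+m2) x - natmul (n1+n2) x = (natmul m1 x - natmul n1 x) + (natmul m2 x - natmul n2 x)"
    by (simp add: natmul_add_nat)
  ultimately show ?thesis by metis
qed

lemma intmul_add: "intmul k (x+y) = intmul k x + intmul k (y::'a::ab_group_add)"
  by (simp add: intmul_alt natmul_add)
lemma intmul_minus: "intmul k (-x) = - intmul k (x::'a::ab_group_add)"
  by (simp add: intmul_alt natmul_minus)
lemma intmul_diff: "intmul k (x-y) = intmul k x - intmul k (y::'a::ab_group_add)"
  by (metis diff_conv_add_uminus intmul_add intmul_minus)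
lemma intmul_zero[simp]: "intmul k (0::'a::ab_group_add) = 0"
  by (simp add: intmul_alt)
lemma intmul_0[simp]: "intmul 0 x = 0" by (simp add: intmul_def)
lemma intmul_1[simp]: "intmul 1 x = x" by (simp add: intmul_def natmul_def)
lemma intmul_uminus_int: "intmul (-k) x = - intmul k (x::'a::ab_group_add)"
  by (metis add.inverse_unique intmul_0 intmul_add_int add.right_inverse)
lemma intmul_diff_int: "intmul (k-l) x = intmul k x - intmul l (x::'a::ab_group_add)"
  by (simp only: diff_conv_add_uminus intmul_add_int intmul_uminus_int)
lemma intmul_natmul: "intmul k (natmul n x) = natmul n (intmul k (x::'a::ab_group_add))"
  by (simp add: intmul_alt natmul_comm)
  (metis diff_conv_add_uminus natmul_add natmul_minus)
lemma natmul_diff: "natmul n (x - y) = natmul n x - natmul n (y::'a::ab_group_add)"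
  by (metis diff_conv_add_uminus natmul_add natmul_minus)
lemma intmul_mult_int: "intmul (k*l) x = intmul k (intmul l (x::'a::ab_group_add))"
proof -
  obtain m1 n1 where 1: "k = int m1 - int n1" by (rule int_as_diff)
  obtain m2 n2 where 2: "l = int m2 - int n2" by (rule int_as_diff)
  have "k * l = int (m1*m2 + n1*n2) - int (m1*n2+n1*m2)" by (simp add: 1 2 algebra_simps)
  then have "intmul (k*l) x = natmul (m1*m2 + n1*n2) x - natmul (m1*n2+n1*m2) x"
    by (simp only: intmul_diff_nat)
  also have "\<dots> = (natmul (m1*m2) x + natmul (n1*n2) x) - (natmul (m1*n2) x + natmul (n1*m2) x)"
    by (simp only: natmul_add_nat)
  also have "\<dots> = natmul m1 (natmul m2 x - natmul n2 x) - natmul n1 (natmul m2 x - natmul n2 x)"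
    by (simp only: natmul_diff natmul_mult_nat) (simp add: algebra_simps)
  also have "\<dots> = intmul k (intmul l x)"
    unfolding 1 2 by (simp only: intmul_diff_nat)
  finally show ?thesis .
qed
lemma intmul_mult_left: "intmul k (x*y) = intmul k x * (y::'a::ring)"
  by (simp add: intmul_alt natmul_mult_left left_diff_distrib)
lemma intmul_mult_right: "intmul k (x*y) = x * intmul k (y::'a::ring)"
  by (simp add: intmul_alt natmul_mult_right right_diff_distrib)
lemma intmul_sum: "intmul k (sum g S) = (\<Sum>i\<in>S. intmul k (g i::'a::ab_group_add))"
  by (induct S rule: infinite_finite_induct) (auto simp: intmul_add)



definition subgrp :: "'a::ab_group_add set \<Rightarrow> bool" where
  "subgrp J \<longleftrightarrow> 0 \<in> J \<and> (\<forall>x\<in>J. \<forall>y\<in>J. x - y \<in> J)"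

lemma subgrp_0: "subgrp J \<Longrightarrow> 0 \<in> J" by (simp add: subgrp_def)
lemma subgrp_diff: "subgrp J \<Longrightarrow> x \<in> J \<Longrightarrow> y \<in> J \<Longrightarrow> x - y \<in> J" by (simp add: subgrp_def)
lemma subgrp_uminus: "subgrp J \<Longrightarrow> x \<in> J \<Longrightarrow> - x \<in> J"
  by (metis diff_0 subgrp_0 subgrp_diff)
lemma subgrp_add: "subgrp J \<Longrightarrow> x \<in> J \<Longrightarrow> y \<in> J \<Longrightarrow> x + y \<in> J"
  by (metis diff_minus_eq_add subgrp_diff subgrp_uminus)
lemma subgrp_natmul: "subgrp J \<Longrightarrow> x \<in> J \<Longrightarrow> natmul n x \<in> J"
  by (induct n) (auto simp: natmul_Suc subgrp_0 subgrp_add)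
lemma subgrp_intmul: "subgrp J \<Longrightarrow> x \<in> J \<Longrightarrow> intmul k x \<in> J"
  by (simp add: intmul_alt subgrp_diff subgrp_natmul)
lemma subgrp_sum: "subgrp J \<Longrightarrow> (\<And>i. i \<in> S \<Longrightarrow> g i \<in> J) \<Longrightarrow> sum g S \<in> J"
  by (induct S rule: infinite_finite_induct) (auto simp: subgrp_0 subgrp_add)

lemma ppow_mult: "ppow a i * ppow a j = ppow (a::'a::semigroup_mult) (i + j + 1)"
  by (induct i) (auto simp: mult.assoc)
lemma ppow_comm: "ppow a i * ppow a j = ppow (a::'a::semigroup_mult) j * ppow a i"
  by (simp add: ppow_mult add.commute)

locale msetup =
  fixes a :: "'a::ring" and p :: nat
  assumes pp: "prime p" and pa: "natmul p a = 0"
begin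

abbreviation "R \<equiv> gen_subring a"

lemma R_induct[consumes 1, case_names zero gen add]:
  assumes "x \<in> R" "P 0" "\<And>c k. P (intmul c (ppow a k))" "\<And>x y. P x \<Longrightarrow> P y \<Longrightarrow> P (x + y)"
  shows "P x"
proof -
  obtain c n where x: "x = (\<Sum>k<n. intmul (c k) (ppow a k))" using assms(1) by (auto simp: gen_subring_def)
  have "P (\<Sum>k<n. intmul (c k) (ppow a k))" for n
    by (induct n) (auto simp: assms(2-4))
  then show ?thesis using x by simp
qed

lemma R_memI: "x = (\<Sum>k<n. intmul (c k) (ppow a k)) \<Longrightarrow> x \<in> R"
  unfolding gen_subring_def by blast

lemma R_gen: "intmul c (ppow a k) \<in> R"
proof -
  have eq: "intmul c (ppow a k) = (\<Sum>i<Suc k. intmul (if i = k then c else 0) (ppow a i))"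
    by (simp add: if_distrib[of "\<lambda>c. intmul c _"] cong: if_cong)
  show ?thesis by (rule R_memI[OF eq])
qed

lemma R_ppow: "ppow a k \<in> R" using R_gen[of 1 k] by simp

lemma R_0: "0 \<in> R" using R_gen[of 0 0] by simp

lemma R_add: assumes "x \<in> R" "y \<in> R" shows "x + y \<in> R"
proof -
  obtain c n where x: "x = (\<Sum>k<n. intmul (c k) (ppow a k))" using assms(1) by (auto simp: gen_subring_def)
  obtain d m where y: "y = (\<Sum>k<m. intmul (d k) (ppow a k))" using assms(2) by (auto simp: gen_subring_def)
  define c' where "c' k = (if k < n then c k else 0)" for k
  define d' where "d' k = (if k < m then d k else 0)" for k
  have 1: "(\<Sum>k<n+m. intmul (c' k) (ppow a k)) = x"
    unfolding x c'_def by (rule sum.mono_neutral_cong_right) auto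
  have 2: "(\<Sum>k<n+m. intmul (d' k) (ppow a k)) = y"
    unfolding y d'_def by (rule sum.mono_neutral_cong_right) auto
  have "x + y = (\<Sum>k<n+m. intmul (c' k + d' k) (ppow a k))"
    unfolding 1[symmetric] 2[symmetric] by (simp add: intmul_add_int sum.distrib)
  then show ?thesis by (rule R_memI)
qed

lemma R_intmul: assumes "x \<in> R" shows "intmul c x \<in> R"
  using assms by (induct rule: R_induct) (auto simp: R_0 intmul_add R_add intmul_mult_int[symmetric] R_gen)

lemma R_uminus: "x \<in> R \<Longrightarrow> - x \<in> R"
  using R_intmul[of x "-1"] by (simp add: intmul_uminus_int)

lemma R_diff: "x \<in> R \<Longrightarrow> y \<in> R \<Longrightarrow> x - y \<in> R"
  by (metis R_add R_uminus diff_conv_add_uminus)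

lemma R_subgrp: "subgrp R" by (simp add: subgrp_def R_0 R_diff)

lemma gen_mult: "intmul c (ppow a i) * intmul d (ppow a j) = intmul (c*d) (ppow a (i+j+1))"
  by (simp only: intmul_mult_left[symmetric] intmul_mult_right[symmetric] ppow_mult intmul_mult_int[symmetric])
    (simp add: mult.commute)

lemma R_mult: assumes "x \<in> R" "y \<in> R" shows "x * y \<in> R"
  using assms(1)
proof (induct rule: R_induct)
  case zero then show ?case by (simp add: R_0)
next
  case (gen c k)
  show ?case using assms(2)
  proof (induct rule: R_induct)
    case zero then show ?case by (simp add: R_0)
  next
    case (gen d j) then show ?case by (simp only: gen_mult R_gen)
  next
    case (add x y) then show ?case by (simp add: distrib_left R_add)
  qed
next
  case (add x y) then show ?case by (simp add: distrib_right R_add)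
qed

lemma R_comm: assumes "x \<in> R" "y \<in> R" shows "x * y = y * x"
  using assms(1)
proof (induct rule: R_induct)
  case zero then show ?case by simp
next
  case (gen c k)
  show ?case using assms(2)
  proof (induct rule: R_induct)
    case zero then show ?case by simp
  next
    case (gen d j) then show ?case by (simp only: gen_mult) (simp add: mult.commute add.commute)
  next
    case (add x y) then show ?case by (simp add: distrib_left distrib_right)
  qed
next
  case (add x y) then show ?case by (simp add: distrib_right distrib_left)
qed

lemma R_ptors: assumes "x \<in> R" shows "natmul p x = 0"
proof -
  have pk: "natmul p (ppow a k) = 0" for k
    by (cases k) (auto simp: pa natmul_mult_left)
  show ?thesis using assms
    by (induct rule: R_induct) (auto simp: natmul_add intmul_natmul[symmetric] pk)
qed

lemma intmul_pdvd: assumes "x \<in> R" "int p dvd k" shows "intmul k x = 0"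
proof -
  from assms(2) obtain q where q: "k = int p * q" by (rule dvdE)
  then have "intmul k x = intmul q (intmul (int p) x)" by (simp add: intmul_mult_int[symmetric] mult.commute)
  also have "intmul (int p) x = natmul p x" by (simp add: intmul_def)
  finally show ?thesis using R_ptors[OF assms(1)] by simp
qed

lemma intmul_mod: "x \<in> R \<Longrightarrow> intmul (k mod int p) x = intmul k x"
proof -
  assume x: "x \<in> R"
  have "k = k mod int p + int p * (k div int p)" by simp
  then have "intmul k x = intmul (k mod int p) x + intmul (int p * (k div int p)) x"
    by (metis intmul_add_int)
  then show ?thesis using intmul_pdvd[OF x] by simp
qed

lemma intmul_cong: "x \<in> R \<Longrightarrow> k mod int p = l mod int p \<Longrightarrow> intmul k x = intmul l x"
  by (metis intmul_mod)

lemma inv_modp: assumes "\<not> int p dvd c" obtains e where "(e * c) mod int p = 1 mod int p"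
proof -
  have "prime (int p)" using pp by simp
  then have "coprime (int p) c" using assms by (simp add: prime_imp_coprime)
  then have "gcd c (int p) = 1" by (simp add: coprime_commute)
  then obtain u v where uv: "u * c + v * int p = 1" using bezout_int[of c "int p"] by auto
  have e: "u * c = 1 + int p * (- v)" using uv by algebra
  have "(u * c) mod int p = 1 mod int p" unfolding e by (rule mod_mult_self2)
  then show ?thesis using that by blast
qed

end


fun actl :: "'a::ring \<Rightarrow> int list \<Rightarrow> 'a \<Rightarrow> 'a" where
  "actl f [] v = 0"
| "actl f (c#cs) v = intmul c v + f * actl f cs v"

definition act :: "'a::ring \<Rightarrow> int poly \<Rightarrow> 'a \<Rightarrow> 'a" where
  "act f h v = actl f (coeffs h) v"

lemma act_pCons: "act f (pCons c q) v = intmul c v + f * act f q v"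
  by (auto simp: act_def cCons_def)

lemma act_0[simp]: "act f 0 v = 0" by (simp add: act_def)

lemma act_add: "act f (h1 + h2) v = act f h1 v + act f h2 v"
proof (induct h1 h2 rule: poly_induct2)
  case 0 then show ?case by simp
next
  case (pCons a p b q) then show ?case
    by (simp add: act_pCons intmul_add_int distrib_left algebra_simps)
qed

lemma act_minus: "act f (- h) v = - act f h v"
  by (induct h rule: pCons_induct) (auto simp: act_pCons intmul_uminus_int)

lemma act_diff: "act f (h1 - h2) v = act f h1 v - act f h2 v"
  by (metis act_add act_minus diff_conv_add_uminus)

lemma act_vadd: "act f h (x + y) = act f h x + act f h y"
  by (induct h rule: pCons_induct) (auto simp: act_pCons intmul_add distrib_left algebra_simps)

lemma act_vzero[simp]: "act f h 0 = 0"
  by (induct h rule: pCons_induct) (auto simp: act_pCons)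

lemma act_vintmul: "act f h (intmul c x) = intmul c (act f h x)"
  by (induct h rule: pCons_induct)
    (auto simp: act_pCons intmul_add intmul_mult_right intmul_mult_int[symmetric] mult.commute)

lemma act_vf: "act f h (f * x) = f * act f h x"
  by (induct h rule: pCons_induct) (auto simp: act_pCons intmul_mult_right distrib_left)

lemma act_smult: "act f (smult c h) v = intmul c (act f h v)"
  by (induct h rule: pCons_induct)
    (auto simp: act_pCons intmul_add intmul_mult_right intmul_mult_int)

lemma act_mult: "act f (h1 * h2) v = act f h1 (act f h2 v)"
  by (induct h1 rule: pCons_induct) (auto simp: act_pCons act_add act_smult)

lemma act_monom1: "act f (monom 1 k) v = ((*) f ^^ k) v"
  by (induct k) (auto simp: monom_Suc act_pCons monom_0)

lemma act_in: "subgrp J \<Longrightarrow> (\<And>x. x \<in> J \<Longrightarrow> f * x \<in> J) \<Longrightarrow> v \<in> J \<Longrightarrow> act f h v \<in> J"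
  by (induct h rule: pCons_induct) (auto simp: act_pCons subgrp_add subgrp_intmul subgrp_0)

lemma act_sum: "degree h < n \<Longrightarrow> act f h v = (\<Sum>k<n. intmul (coeff h k) (((*) f ^^ k) v))"
proof (induct h arbitrary: n rule: pCons_induct)
  case 0 then show ?case by simp
next
  case (pCons c q)
  show ?case
  proof (cases "q = 0")
    case True
    have "(\<Sum>k<n. intmul (coeff (pCons c q) k) (((*) f ^^ k) v)) = (\<Sum>k<n. if k = 0 then intmul c v else 0)"
      using True by (intro sum.cong) (auto simp: coeff_pCons split: nat.splits)
    also have "\<dots> = intmul c v" using pCons.prems by (simp add: sum.delta)
    finally show ?thesis using True by (simp add: act_pCons)
  next
    case False
    then obtain n' where n: "n = Suc n'" and d: "degree q < n'" using pCons.prems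
      by (cases n) auto
    have "(\<Sum>k<n. intmul (coeff (pCons c q) k) (((*) f ^^ k) v))
       = intmul c v + (\<Sum>k<n'. intmul (coeff q k) (((*) f ^^ Suc k) v))"
      unfolding n sum.lessThan_Suc_shift by simp
    also have "\<dots> = intmul c v + f * (\<Sum>k<n'. intmul (coeff q k) (((*) f ^^ k) v))"
      by (simp add: sum_distrib_left intmul_mult_right)
    finally show ?thesis using pCons.hyps(2)[OF d] by (simp add: act_pCons)
  qed
qed

context msetup begin

lemma fp_R: "f \<in> R \<Longrightarrow> v \<in> R \<Longrightarrow> ((*) f ^^ k) v \<in> R"
  by (induct k) (auto simp: R_mult)

lemma act_R: "f \<in> R \<Longrightarrow> v \<in> R \<Longrightarrow> act f h v \<in> R"
  by (rule act_in[OF R_subgrp]) (auto simp: R_mult)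

lemma act_pz: assumes "f \<in> R" "v \<in> R" "\<forall>k. int p dvd coeff h k" shows "act f h v = 0"
proof -
  have "act f h v = (\<Sum>k<Suc (degree h). intmul (coeff h k) (((*) f ^^ k) v))"
    by (rule act_sum) simp
  also have "\<dots> = 0" by (rule sum.neutral) (use assms in \<open>auto intro!: intmul_pdvd fp_R\<close>)
  finally show ?thesis .
qed

end


context msetup begin

lemma fin_ring:
  assumes I: "subgrp I" "I \<subseteq> R" "\<And>x s. x \<in> I \<Longrightarrow> s \<in> R \<Longrightarrow> x * s \<in> I"
    "\<And>x s. x \<in> I \<Longrightarrow> s \<in> R \<Longrightarrow> s * x \<in> I"
  and Fin: "finite Fin" "Fin \<subseteq> R" "\<forall>x\<in>R. \<exists>y\<in>Fin. x - y \<in> I"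
  and A: "A \<subseteq> R" "r \<in> R" "\<forall>x\<in>A. r - x \<notin> I"
  shows "\<exists>C ad mu z ng \<phi>. finite_ring C ad mu z ng \<and> ring_hom_into \<phi> R C ad mu \<and> \<phi> r \<notin> \<phi> ` A"
proof -
  define cls where "cls x = {y\<in>R. x - y \<in> I}" for x
  have cls_eq: "cls x = cls y \<longleftrightarrow> x - y \<in> I" if "x \<in> R" "y \<in> R" for x y
  proof
    assume eq: "cls x = cls y"
    have "y \<in> cls y" using that I(1) by (simp add: cls_def subgrp_0)
    then have "y \<in> cls x" using eq by simp
    then show "x - y \<in> I" by (simp add: cls_def)
  next
    assume xy: "x - y \<in> I"
    have "x - z \<in> I \<longleftrightarrow> y - z \<in> I" for z
    proof
      assume "x - z \<in> I"
      then have "(x - z) - (x - y) \<in> I" using xy I(1) subgrp_diff by blast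
      moreover have "(x - z) - (x - y) = y - z" by simp
      ultimately show "y - z \<in> I" by simp
    next
      assume "y - z \<in> I"
      then have "(y - z) + (x - y) \<in> I" using xy I(1) subgrp_add by blast
      moreover have "(y - z) + (x - y) = x - z" by simp
      ultimately show "x - z \<in> I" by simp
    qed
    then show "cls x = cls y" by (auto simp: cls_def)
  qed
  define Q where "Q = cls ` R"
  have "Q \<subseteq> cls ` Fin"
  proof
    fix q assume "q \<in> Q"
    then obtain x where x: "x \<in> R" "q = cls x" by (auto simp: Q_def)
    then obtain y where "y \<in> Fin" "x - y \<in> I" using Fin(3) by blast
    then show "q \<in> cls ` Fin" using x cls_eq Fin(2) by blast
  qed
  then have "finite Q" using Fin(1) finite_subset by blast
  then obtain h where h: "bij_betw h Q {0..<card Q}" using ex_bij_betw_finite_nat by blast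
  define C where "C = {0..<card Q}"
  define \<phi> where "\<phi> x = h (cls x)" for x
  have phi_eq: "\<phi> x = \<phi> y \<longleftrightarrow> x - y \<in> I" if "x \<in> R" "y \<in> R" for x y
  proof -
    have "inj_on h Q" using h by (simp add: bij_betw_def)
    then have "\<phi> x = \<phi> y \<longleftrightarrow> cls x = cls y" using that by (auto simp: \<phi>_def Q_def inj_on_def)
    then show ?thesis using cls_eq that by simp
  qed
  have CR: "C = \<phi> ` R" using h by (auto simp: C_def \<phi>_def Q_def bij_betw_def image_image)
  define rep where "rep u = (SOME x. x \<in> R \<and> \<phi> x = u)" for u
  have rep: "rep (\<phi> x) \<in> R \<and> \<phi> (rep (\<phi> x)) = \<phi> x" if "x \<in> R" for x
    unfolding rep_def by (rule someI[of _ x]) (use that in auto)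
  have rep2: "rep (\<phi> x) - x \<in> I" if "x \<in> R" for x using rep[OF that] phi_eq that by blast
  define ad where "ad u v = \<phi> (rep u + rep v)" for u v
  define mu where "mu u v = \<phi> (rep u * rep v)" for u v
  define ng where "ng u = \<phi> (- rep u)" for u
  have ad_hom[simp]: "ad (\<phi> x) (\<phi> y) = \<phi> (x + y)" if "x \<in> R" "y \<in> R" for x y
  proof -
    have "(rep (\<phi> x) + rep (\<phi> y)) - (x + y) = (rep (\<phi> x) - x) + (rep (\<phi> y) - y)" by simp
    also have "\<dots> \<in> I" using rep2 that I(1) by (simp add: subgrp_add)
    finally have d: "(rep (\<phi> x) + rep (\<phi> y)) - (x + y) \<in> I" .
    have "rep (\<phi> x) + rep (\<phi> y) \<in> R" using rep that R_add by blast
    then show ?thesis unfolding ad_def using phi_eq[OF _ R_add[OF that]] d by blast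
  qed
  have mu_hom[simp]: "mu (\<phi> x) (\<phi> y) = \<phi> (x * y)" if "x \<in> R" "y \<in> R" for x y
  proof -
    have "(rep (\<phi> x) * rep (\<phi> y)) - (x * y) = (rep (\<phi> x) - x) * rep (\<phi> y) + x * (rep (\<phi> y) - y)"
      by (simp add: algebra_simps)
    also have "\<dots> \<in> I" using rep2 that I rep by (simp add: subgrp_add)
    finally have d: "(rep (\<phi> x) * rep (\<phi> y)) - (x * y) \<in> I" .
    have "rep (\<phi> x) * rep (\<phi> y) \<in> R" using rep that R_mult by blast
    then show ?thesis unfolding mu_def using phi_eq[OF _ R_mult[OF that]] d by blast
  qed
  have ng_hom[simp]: "ng (\<phi> x) = \<phi> (- x)" if "x \<in> R" for x
  proof -
    have "(- rep (\<phi> x)) - (- x) = - (rep (\<phi> x) - x)" by simp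
    also have "\<dots> \<in> I" using rep2[OF that] I(1) subgrp_uminus by blast
    finally have d: "(- rep (\<phi> x)) - (- x) \<in> I" .
    have "- rep (\<phi> x) \<in> R" using rep that R_uminus by blast
    then show ?thesis unfolding ng_def using phi_eq[OF _ R_uminus[OF that]] d by blast
  qed
  have finC: "finite (\<phi> ` R)" unfolding CR[symmetric] C_def by simp
  have fr: "finite_ring C ad mu (\<phi> 0) ng"
    unfolding finite_ring_def CR
    using finC
    by (auto simp: R_0 R_add R_mult R_uminus add_ac mult.assoc distrib_left distrib_right)
  have hom: "ring_hom_into \<phi> R C ad mu"
    unfolding ring_hom_into_def CR by auto
  have "\<phi> r \<notin> \<phi> ` A"
  proof
    assume "\<phi> r \<in> \<phi> ` A"
    then obtain x where "x \<in> A" "\<phi> r = \<phi> x" by auto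
    then show False using phi_eq A by blast
  qed
  then show ?thesis using fr hom by blast
qed

end


context msetup begin

lemma f_times_ppow:
  assumes "f = (\<Sum>k<n. intmul (c k) (ppow a k))"
  shows "f * ppow a j = (\<Sum>k<n. intmul (c k) (ppow a (k + j + 1)))"
  using assms by (simp add: sum_distrib_right intmul_mult_left[symmetric] ppow_mult)

lemma fin_index:
  assumes J: "subgrp J" "J \<subseteq> R" "\<And>x. x \<in> J \<Longrightarrow> f * x \<in> J"
  and f: "f = (\<Sum>k<n. intmul (c k) (ppow a k))" "m < n" "\<not> int p dvd c m"
         "\<forall>k. m < k \<and> k < n \<longrightarrow> int p dvd c k"
  and rel: "\<forall>i\<le>m. \<exists>D e. ((*) f ^^ D) (ppow a i) - (\<Sum>k<D. intmul (e k) (((*) f ^^ k) (ppow a i))) \<in> J"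
  shows "\<exists>Fin. finite Fin \<and> Fin \<subseteq> R \<and> (\<forall>x\<in>R. \<exists>y\<in>Fin. x - y \<in> J)"
proof -
  have fR: "f \<in> R" using f(1) unfolding gen_subring_def by blast
  from rel have "\<forall>i. \<exists>D e. i \<le> m \<longrightarrow> ((*) f ^^ D) (ppow a i) - (\<Sum>k<D. intmul (e k) (((*) f ^^ k) (ppow a i))) \<in> J"
    by blast
  then obtain Dd ee where rel': "\<And>i. i \<le> m \<Longrightarrow>
     ((*) f ^^ Dd i) (ppow a i) - (\<Sum>k<Dd i. intmul (ee i k) (((*) f ^^ k) (ppow a i))) \<in> J"
    by metis
  define B where "B = (\<lambda>(i,k). ((*) f ^^ k) (ppow a i)) ` (SIGMA i:{..m}. {..<Dd i})"
  have Bfin: "finite B" unfolding B_def by auto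
  have BR: "B \<subseteq> R" unfolding B_def using fp_R[OF fR R_ppow] by auto
  have Bmem: "((*) f ^^ k) (ppow a i) \<in> B" if "i \<le> m" "k < Dd i" for i k
    unfolding B_def using that by force
  define S where "S = {j + (\<Sum>b\<in>B. intmul (w b) b) | j w. j \<in> J}"
  have Smem: "z \<in> S" if "j \<in> J" "z = j + (\<Sum>b\<in>B. intmul (w b) b)" for z j w
    using that unfolding S_def by blast
  have S0: "0 \<in> S"
  proof -
    show ?thesis unfolding S_def
      by (rule CollectI, rule exI[of _ 0], rule exI[of _ "\<lambda>_. 0"]) (simp add: subgrp_0[OF J(1)])
  qed
  have Sdiff: "x - y \<in> S" if xS: "x \<in> S" and yS: "y \<in> S" for x y
  proof -
    obtain j1 w1 where 1: "j1 \<in> J" "x = j1 + (\<Sum>b\<in>B. intmul (w1 b) b)" using xS unfolding S_def by auto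
    obtain j2 w2 where 2: "j2 \<in> J" "y = j2 + (\<Sum>b\<in>B. intmul (w2 b) b)" using yS unfolding S_def by auto
    have "x - y = (j1 - j2) + (\<Sum>b\<in>B. intmul (w1 b - w2 b) b)"
      unfolding 1 2 by (simp add: intmul_diff_int sum_subtractf)
    moreover have "j1 - j2 \<in> J" using 1 2 J(1) by (simp add: subgrp_diff)
    ultimately show ?thesis by (intro Smem[where w="\<lambda>b. w1 b - w2 b"]) simp_all
  qed
  have Ssub: "subgrp S" using S0 Sdiff by (simp add: subgrp_def)
  have JS: "J \<subseteq> S"
  proof
    fix x assume xJ: "x \<in> J"
    show "x \<in> S" by (rule Smem[where w="\<lambda>_. 0"]) (simp_all add: xJ)
  qed
  have BS: "B \<subseteq> S"
  proof
    fix x assume x: "x \<in> B"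
    have "(\<Sum>b\<in>B. intmul ((\<lambda>b. if b = x then 1 else 0) b) b) = (\<Sum>b\<in>B. if b = x then b else 0)"
      by (intro sum.cong) auto
    also have "\<dots> = x" using x Bfin by (simp add: sum.delta')
    finally have xe: "x = 0 + (\<Sum>b\<in>B. intmul ((\<lambda>b. if b = x then 1 else 0) b) b)" by simp
    show "x \<in> S" by (rule Smem[OF subgrp_0[OF J(1)] xe])
  qed
  have SR: "S \<subseteq> R"
  proof
    fix x assume "x \<in> S"
    then obtain j w where "j \<in> J" "x = j + (\<Sum>b\<in>B. intmul (w b) b)" unfolding S_def by auto
    then show "x \<in> R" using J(2) BR R_subgrp
      by (auto intro!: R_add subgrp_sum R_intmul)
  qed
  have fB: "f * b \<in> S" if bB: "b \<in> B" for b
  proof -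
    obtain i k where ik: "i \<le> m" "k < Dd i" "b = ((*) f ^^ k) (ppow a i)"
      using bB unfolding B_def by auto
    have fb: "f * b = ((*) f ^^ Suc k) (ppow a i)" using ik by simp
    show ?thesis
    proof (cases "Suc k < Dd i")
      case True
      then have "((*) f ^^ Suc k) (ppow a i) \<in> B" using Bmem ik by blast
      then show ?thesis using fb BS by auto
    next
      case False
      then have D: "Dd i = Suc k" using ik by simp
      let ?s = "(\<Sum>k<Dd i. intmul (ee i k) (((*) f ^^ k) (ppow a i)))"
      have "?s \<in> S" using Ssub by (intro subgrp_sum subgrp_intmul) (use Bmem ik BS in auto)
      moreover have "((*) f ^^ Dd i) (ppow a i) - ?s \<in> S" using rel' ik JS by auto
      ultimately have "(((*) f ^^ Dd i) (ppow a i) - ?s) + ?s \<in> S" using Ssub subgrp_add by blast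
      then show ?thesis using fb D by simp
    qed
  qed
  have fS: "f * x \<in> S" if xS: "x \<in> S" for x
  proof -
    obtain j w where jw: "j \<in> J" "x = j + (\<Sum>b\<in>B. intmul (w b) b)" using xS unfolding S_def by auto
    have "f * x = f * j + (\<Sum>b\<in>B. intmul (w b) (f * b))"
      unfolding jw by (simp add: distrib_left sum_distrib_left intmul_mult_right)
    moreover have "f * j \<in> S" using J(3) jw JS by auto
    moreover have "(\<Sum>b\<in>B. intmul (w b) (f * b)) \<in> S"
      using Ssub fB by (intro subgrp_sum subgrp_intmul) auto
    ultimately show ?thesis using Ssub subgrp_add by metis
  qed
  obtain e where e: "(e * c m) mod int p = 1 mod int p" using inv_modp f(3) by blast
  have ppS: "ppow a K \<in> S" for K
  proof (induct K rule: less_induct)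
    case (less K)
    show ?case
    proof (cases "K \<le> m")
      case True
      show ?thesis
      proof (cases "Dd K = 0")
        case False
        then have "((*) f ^^ 0) (ppow a K) \<in> B" using Bmem True by blast
        then show ?thesis using BS by auto
      next
        case True
        then show ?thesis using rel'[OF \<open>K \<le> m\<close>] JS by auto
      qed
    next
      case False
      define j where "j = K - m - 1"
      have K: "K = m + j + 1" using False j_def by simp
      let ?g = "\<lambda>k. intmul (c k) (ppow a (k + j + 1))"
      have "f * ppow a j = (\<Sum>k<n. ?g k)" by (rule f_times_ppow[OF f(1)])
      also have "\<dots> = (\<Sum>k<Suc m. ?g k)"
        using f(2,4) by (intro sum.mono_neutral_right) (auto simp del: ppow.simps intro!: intmul_pdvd R_ppow)
      also have "\<dots> = (\<Sum>k<m. ?g k) + intmul (c m) (ppow a K)" by (simp add: K)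
      finally have eq: "intmul (c m) (ppow a K) = f * ppow a j - (\<Sum>k<m. ?g k)" by (simp add: algebra_simps)
      have "f * ppow a j \<in> S" using fS less K by simp
      moreover have "(\<Sum>k<m. ?g k) \<in> S"
        using Ssub less K by (intro subgrp_sum subgrp_intmul) (auto simp del: ppow.simps)
      ultimately have "intmul (c m) (ppow a K) \<in> S" using eq Ssub subgrp_diff by metis
      then have "intmul e (intmul (c m) (ppow a K)) \<in> S" using Ssub subgrp_intmul by blast
      moreover have "intmul e (intmul (c m) (ppow a K)) = ppow a K"
        using intmul_cong[OF R_ppow e] by (simp add: intmul_mult_int[symmetric])
      ultimately show ?thesis by simp
    qed
  qed
  have RS: "R \<subseteq> S"
  proof
    fix x assume "x \<in> R"
    then show "x \<in> S"
      by (induct rule: R_induct) (auto simp: S0 ppS Ssub subgrp_intmul subgrp_add)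
  qed
  define Fin where "Fin = (\<lambda>w. \<Sum>b\<in>B. intmul (w b) b) ` (B \<rightarrow>\<^sub>E {0..<int p})"
  have "finite Fin" unfolding Fin_def using Bfin by (auto intro!: finite_PiE)
  moreover have "Fin \<subseteq> R" unfolding Fin_def using BR R_subgrp
    by (auto intro!: subgrp_sum R_intmul)
  moreover have "\<exists>y\<in>Fin. x - y \<in> J" if "x \<in> R" for x
  proof -
    have "x \<in> S" using RS that by blast
    then obtain j w where jw: "j \<in> J" "x = j + (\<Sum>b\<in>B. intmul (w b) b)" unfolding S_def by auto
    define w' where "w' = restrict (\<lambda>b. w b mod int p) B"
    have p0: "int p > 0" using pp prime_gt_0_nat by simp
    have hw: "w' \<in> B \<rightarrow>\<^sub>E {0..<int p}" unfolding w'_def using p0 by auto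
    have heq: "(\<Sum>b\<in>B. intmul (w' b) b) = (\<Sum>b\<in>B. intmul (w b) b)"
      unfolding w'_def using BR by (intro sum.cong) (auto simp: intmul_mod)
    have yF: "(\<Sum>b\<in>B. intmul (w b) b) \<in> Fin" unfolding Fin_def
      by (rule rev_image_eqI[where x=w']) (use hw heq in simp_all)
    have "x - (\<Sum>b\<in>B. intmul (w b) b) = j" using jw by simp
    then show ?thesis using yF jw(1) by metis
  qed
  ultimately show ?thesis by blast
qed

end


lemma fp_zero[simp]: "((*) (f::'a::ring) ^^ k) 0 = 0" by (induct k) auto
lemma fp_diff: "((*) (f::'a::ring) ^^ k) (x - y) = ((*) f ^^ k) x - ((*) f ^^ k) y"
  by (induct k) (auto simp: right_diff_distrib)
lemma fp_add: "((*) (f::'a::ring) ^^ k) (x + y) = ((*) f ^^ k) x + ((*) f ^^ k) y"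
  by (induct k) (auto simp: distrib_left)
lemma fp_mult_right: "((*) (f::'a::ring) ^^ k) u * s = ((*) f ^^ k) (u * s)"
  by (induct k) (auto simp: mult.assoc)

context msetup begin

lemma fp_mult_left: assumes "f \<in> R" "s \<in> R" "u \<in> R"
  shows "s * ((*) f ^^ k) u = ((*) f ^^ k) (s * u)"
proof (induct k)
  case 0 then show ?case by simp
next
  case (Suc k)
  have "s * ((*) f ^^ Suc k) u = (s * f) * ((*) f ^^ k) u" by (simp add: mult.assoc)
  also have "\<dots> = f * (s * ((*) f ^^ k) u)" using R_comm[OF assms(2,1)] by (simp add: mult.assoc)
  finally show ?case using Suc by simp
qed

lemma torsion_rel:
  assumes fR: "f \<in> R" and u: "u \<in> R" and N: "subgrp N" "\<And>x. x \<in> N \<Longrightarrow> f * x \<in> N"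
    and g: "\<not> (\<forall>k. int p dvd coeff g k)" "act f g u \<in> N"
  shows "\<exists>D e. ((*) f ^^ D) u - (\<Sum>k<D. intmul (e k) (((*) f ^^ k) u)) \<in> N"
proof -
  define P where "P = {k. \<not> int p dvd coeff g k}"
  have Pfin: "finite P"
  proof (rule finite_subset)
    show "P \<subseteq> {..degree g}"
    proof
      fix k assume kP: "k \<in> P"
      show "k \<in> {..degree g}"
      proof (rule ccontr)
        assume "k \<notin> {..degree g}"
        then have "coeff g k = 0" by (simp add: coeff_eq_0)
        then show False using kP by (simp add: P_def)
      qed
    qed
  qed simp
  have Pne: "P \<noteq> {}" using g(1) P_def by auto
  define D where "D = Max P"
  have DP: "\<not> int p dvd coeff g D" using Max_in[OF Pfin Pne] D_def P_def by auto
  have above: "int p dvd coeff g k" if "D < k" for k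
    using Max_ge[OF Pfin, of k] that D_def P_def by force
  have Ddeg: "D \<le> degree g" using DP le_degree by force
  obtain e0 where e0: "(e0 * coeff g D) mod int p = 1 mod int p" using inv_modp DP by blast
  define g' where "g' = smult e0 g"
  have "act f g' u = intmul e0 (act f g u)" unfolding g'_def by (simp add: act_smult)
  then have inN: "act f g' u \<in> N" using g(2) N(1) subgrp_intmul by metis
  let ?h = "\<lambda>k. intmul (coeff g' k) (((*) f ^^ k) u)"
  have "act f g' u = (\<Sum>k<Suc (degree g). ?h k)"
    by (rule act_sum) (simp add: g'_def le_imp_less_Suc degree_smult_le)
  also have "\<dots> = (\<Sum>k<Suc D. ?h k)"
    using Ddeg above by (intro sum.mono_neutral_right) (auto simp: g'_def intro!: intmul_pdvd fp_R fR u)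
  also have "\<dots> = (\<Sum>k<D. ?h k) + ((*) f ^^ D) u"
    using intmul_cong[OF fp_R[OF fR u] e0] by (simp add: g'_def)
  finally have fin: "((*) f ^^ D) u - (\<Sum>k<D. intmul (- coeff g' k) (((*) f ^^ k) u)) \<in> N"
    using inN by (simp add: intmul_uminus_int sum_negf add.commute)
  show ?thesis by (rule exI[of _ D], rule exI[of _ "\<lambda>k. - coeff g' k"], rule fin)
qed

lemma sep_core:
  assumes f: "f = (\<Sum>k<n. intmul (c k) (ppow a k))" "m < n" "\<not> int p dvd c m"
         "\<forall>k. m < k \<and> k < n \<longrightarrow> int p dvd c k"
    and A: "subgrp A" "A \<subseteq> R" "\<And>x. x \<in> A \<Longrightarrow> f * x \<in> A" and r: "r \<in> R" "r \<notin> A"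
  shows "\<exists>I Fin. subgrp I \<and> I \<subseteq> R \<and> (\<forall>x s. x \<in> I \<longrightarrow> s \<in> R \<longrightarrow> x * s \<in> I) \<and>
     (\<forall>x s. x \<in> I \<longrightarrow> s \<in> R \<longrightarrow> s * x \<in> I) \<and> finite Fin \<and> Fin \<subseteq> R \<and>
     (\<forall>x\<in>R. \<exists>y\<in>Fin. x - y \<in> I) \<and> (\<forall>x\<in>A. r - x \<notin> I)"
proof -
  have fR: "f \<in> R" using f(1) unfolding gen_subring_def by blast
  define FF where "FF = {N. subgrp N \<and> N \<subseteq> R \<and> A \<subseteq> N \<and> (\<forall>x\<in>N. f * x \<in> N) \<and> r \<notin> N}"
  have AF: "A \<in> FF" using A r by (simp add: FF_def)
  have "\<forall>C\<in>chains FF. \<exists>U\<in>FF. \<forall>X\<in>C. X \<subseteq> U"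
  proof
    fix C assume C: "C \<in> chains FF"
    show "\<exists>U\<in>FF. \<forall>X\<in>C. X \<subseteq> U"
    proof (cases "C = {}")
      case True then show ?thesis using AF by auto
    next
      case False
      have CF: "C \<subseteq> FF" and ch: "\<forall>X\<in>C. \<forall>Y\<in>C. X \<subseteq> Y \<or> Y \<subseteq> X"
        using C by (auto simp: chains_def chain_subset_def)
      have "\<Union>C \<in> FF"
        unfolding FF_def
      proof (intro CollectI conjI)
        show "subgrp (\<Union>C)" unfolding subgrp_def
        proof (intro conjI ballI)
          obtain X where "X \<in> C" using False by auto
          then show "0 \<in> \<Union>C" using CF FF_def subgrp_0 by blast
        next
          fix x y assume "x \<in> \<Union>C" "y \<in> \<Union>C"
          then obtain X Y where XY: "X \<in> C" "Y \<in> C" "x \<in> X" "y \<in> Y" by auto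
          then have "x \<in> X \<union> Y" "y \<in> X \<union> Y" by auto
          moreover have "X \<union> Y = X \<or> X \<union> Y = Y" using ch XY by blast
          ultimately show "x - y \<in> \<Union>C" using XY CF unfolding FF_def
            by (metis (no_types, lifting) UnionI mem_Collect_eq subgrp_diff subsetD)
        qed
        show "\<Union>C \<subseteq> R" using CF FF_def by auto
        show "A \<subseteq> \<Union>C"
        proof -
          obtain X where X: "X \<in> C" using False by auto
          then have "A \<subseteq> X" using CF FF_def by auto
          then show ?thesis using X by auto
        qed
        show "\<forall>x\<in>\<Union>C. f * x \<in> \<Union>C" using CF FF_def by blast
        show "r \<notin> \<Union>C" using CF FF_def by blast
      qed
      then show ?thesis by blast
    qed
  qed
  from Zorn_Lemma2[OF this] obtain N where NF: "N \<in> FF" and Nmax: "\<forall>X\<in>FF. N \<subseteq> X \<longrightarrow> X = N"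
    by blast
  have Nsub: "subgrp N" and NR: "N \<subseteq> R" and AN: "A \<subseteq> N" and Nf: "\<And>x. x \<in> N \<Longrightarrow> f * x \<in> N"
    and rN: "r \<notin> N" using NF by (auto simp: FF_def)
  have p1: "\<not> int p dvd 1" using prime_gt_1_nat[OF pp] by simp
  have tors: "\<exists>g. \<not> (\<forall>k. int p dvd coeff g k) \<and> act f g u \<in> N" if u: "u \<in> R" for u
  proof (rule ccontr)
    assume "\<not> ?thesis"
    then have H: "\<And>g. act f g u \<in> N \<Longrightarrow> \<forall>k. int p dvd coeff g k" by blast
    have rk: "\<exists>x c. x \<in> N \<and> r = x + act f (monom 1 k * c) u" for k
    proof (rule ccontr)
      assume nr: "\<not> ?thesis"
      define Nk where "Nk = {x + act f (monom 1 k * c) u | x c. x \<in> N}"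
      have "Nk \<in> FF" unfolding FF_def
      proof (intro CollectI conjI)
        show "subgrp Nk" unfolding subgrp_def
        proof (intro conjI ballI)
          show "0 \<in> Nk" unfolding Nk_def using subgrp_0[OF Nsub]
            by (metis (mono_tags, lifting) act_0 add_0 mem_Collect_eq mult_zero_right)
        next
          fix x y assume "x \<in> Nk" "y \<in> Nk"
          then obtain x1 c1 x2 c2 where "x1 \<in> N" "x = x1 + act f (monom 1 k * c1) u"
            "x2 \<in> N" "y = x2 + act f (monom 1 k * c2) u" unfolding Nk_def by auto
          moreover then have "x - y = (x1 - x2) + act f (monom 1 k * (c1 - c2)) u"
            by (simp add: right_diff_distrib act_diff)
          ultimately show "x - y \<in> Nk" unfolding Nk_def using Nsub subgrp_diff by blast
        qed
        show "Nk \<subseteq> R" unfolding Nk_def using NR act_R[OF fR u] R_add by blast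
        show "A \<subseteq> Nk"
        proof
          fix x assume "x \<in> A"
          then have "x \<in> N" "x = x + act f (monom 1 k * 0) u" using AN by auto
          then show "x \<in> Nk" unfolding Nk_def by blast
        qed
        show "\<forall>x\<in>Nk. f * x \<in> Nk"
        proof
          fix y assume "y \<in> Nk"
          then obtain x c where xc: "x \<in> N" "y = x + act f (monom 1 k * c) u" unfolding Nk_def by auto
          have "f * act f (monom 1 k * c) u = act f (monom 1 k * pCons 0 c) u"
            by (simp add: act_mult act_pCons act_vf)
          then have "f * y = f * x + act f (monom 1 k * pCons 0 c) u" using xc by (simp add: distrib_left)
          then show "f * y \<in> Nk" unfolding Nk_def using Nf xc by blast
        qed
        show "r \<notin> Nk" using nr Nk_def by auto
      qed
      moreover have "N \<subseteq> Nk"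
      proof
        fix x assume "x \<in> N"
        then have "x \<in> N" "x = x + act f (monom 1 k * 0) u" by auto
        then show "x \<in> Nk" unfolding Nk_def by blast
      qed
      ultimately have "Nk = N" using Nmax by blast
      moreover have "0 + act f (monom 1 k * 1) u \<in> Nk" unfolding Nk_def using subgrp_0[OF Nsub] by blast
      ultimately have "act f (monom 1 k) u \<in> N" by simp
      then have "int p dvd coeff (monom 1 k) k" using H by blast
      then show False using p1 by simp
    qed
    obtain x0 c0 where 0: "x0 \<in> N" "r = x0 + act f c0 u" using rk[of 0] by auto
    have "int p dvd coeff c0 j" for j
    proof -
      obtain x1 c1 where 1: "x1 \<in> N" "r = x1 + act f (monom 1 (Suc j) * c1) u" using rk[of "Suc j"] by auto
      have "act f (c0 - monom 1 (Suc j) * c1) u = x1 - x0"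
        using 0 1 by (simp add: act_diff algebra_simps)
      then have "act f (c0 - monom 1 (Suc j) * c1) u \<in> N" using 0 1 Nsub subgrp_diff by metis
      then have "int p dvd coeff (c0 - monom 1 (Suc j) * c1) j" using H by blast
      then show ?thesis by (simp add: coeff_monom_mult)
    qed
    then have "act f c0 u = 0" using act_pz fR u by blast
    then show False using 0 rN by simp
  qed
  have relN: "\<forall>i\<le>m. \<exists>D e. ((*) f ^^ D) (ppow a i) - (\<Sum>k<D. intmul (e k) (((*) f ^^ k) (ppow a i))) \<in> N"
  proof (intro allI impI)
    fix i
    obtain g where "\<not> (\<forall>k. int p dvd coeff g k)" "act f g (ppow a i) \<in> N" using tors R_ppow by blast
    then show "\<exists>D e. ((*) f ^^ D) (ppow a i) - (\<Sum>k<D. intmul (e k) (((*) f ^^ k) (ppow a i))) \<in> N"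
      using torsion_rel[OF fR R_ppow Nsub Nf] by blast
  qed
  obtain Fin where Fin: "finite Fin" "Fin \<subseteq> R" "\<forall>x\<in>R. \<exists>y\<in>Fin. x - y \<in> N"
    using fin_index[OF Nsub NR Nf f relN] by blast
  define Psi where "Psi k = restrict (\<lambda>x. SOME y. y \<in> Fin \<and> ((*) f ^^ k) x - y \<in> N) Fin" for k
  have Psi_spec: "Psi k x \<in> Fin \<and> ((*) f ^^ k) x - Psi k x \<in> N" if "x \<in> Fin" for k x
  proof -
    have "\<exists>y. y \<in> Fin \<and> ((*) f ^^ k) x - y \<in> N" using Fin that fp_R[OF fR] by blast
    then have "(SOME y. y \<in> Fin \<and> ((*) f ^^ k) x - y \<in> N) \<in> Fin \<and>
      ((*) f ^^ k) x - (SOME y. y \<in> Fin \<and> ((*) f ^^ k) x - y \<in> N) \<in> N" by (rule someI_ex)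
    then show ?thesis unfolding Psi_def using that by simp
  qed
  have "range Psi \<subseteq> Fin \<rightarrow>\<^sub>E Fin" using Psi_spec by (auto simp: Psi_def)
  moreover have "finite (Fin \<rightarrow>\<^sub>E Fin)" using Fin(1) by (simp add: finite_PiE)
  ultimately have "\<not> inj Psi" using finite_subset range_inj_infinite by blast
  then obtain i0 j0 where ij0: "i0 \<noteq> j0" "Psi i0 = Psi j0" unfolding inj_def by blast
  obtain i j where ij: "i < j" "Psi i = Psi j"
    using ij0 by (metis linorder_neqE_nat)
  let ?F = "\<lambda>k v. ((*) f ^^ k) v"
  have ijN: "?F i u - ?F j u \<in> N" if "u \<in> R" for u
  proof -
    have "\<exists>y\<in>Fin. u - y \<in> N" using Fin(3) that by simp
    then obtain y where y: "y \<in> Fin" "u - y \<in> N" by blast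
    have "?F i y - Psi i y \<in> N" "?F j y - Psi j y \<in> N" using Psi_spec[OF y(1)] by auto
    then have "?F i y - Psi i y \<in> N" "?F j y - Psi i y \<in> N" using ij(2) by auto
    then have 1: "(?F i y - Psi i y) - (?F j y - Psi i y) \<in> N" using Nsub subgrp_diff by blast
    have FN: "?F k (u - y) \<in> N" for k by (induct k) (auto simp: y Nf)
    have "?F i u - ?F j u = ((?F i y - Psi i y) - (?F j y - Psi i y)) + (?F i (u - y) - ?F j (u - y))"
      by (simp add: fp_diff)
    then show ?thesis using 1 FN Nsub subgrp_diff subgrp_add by metis
  qed
  define I where "I = {?F j u - ?F i u | u. u \<in> R}"
  have Isub: "subgrp I" unfolding subgrp_def
  proof (intro conjI ballI)
    show "0 \<in> I" unfolding I_def using R_0 by force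
  next
    fix x y assume "x \<in> I" "y \<in> I"
    then obtain u v where "u \<in> R" "v \<in> R" "x = ?F j u - ?F i u" "y = ?F j v - ?F i v" unfolding I_def by auto
    moreover then have "x - y = ?F j (u - v) - ?F i (u - v)" by (simp add: fp_diff)
    ultimately show "x - y \<in> I" unfolding I_def using R_diff by blast
  qed
  have IR: "I \<subseteq> R" unfolding I_def using fp_R[OF fR] R_diff by blast
  have IN: "I \<subseteq> N"
  proof
    fix x assume "x \<in> I"
    then obtain u where "u \<in> R" "x = ?F j u - ?F i u" unfolding I_def by auto
    then show "x \<in> N" using ijN subgrp_uminus[OF Nsub] by (metis minus_diff_eq)
  qed
  have Ir: "x * s \<in> I" if xI: "x \<in> I" and sR: "s \<in> R" for x s
  proof -
    obtain u where "u \<in> R" "x = ?F j u - ?F i u" using xI unfolding I_def by auto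
    then have "x * s = ?F j (u * s) - ?F i (u * s)" "u * s \<in> R"
      using sR by (auto simp: left_diff_distrib fp_mult_right R_mult)
    then show ?thesis unfolding I_def by blast
  qed
  have Il: "s * x \<in> I" if xI: "x \<in> I" and sR: "s \<in> R" for x s
  proof -
    obtain u where "u \<in> R" "x = ?F j u - ?F i u" using xI unfolding I_def by auto
    then have "s * x = ?F j (s * u) - ?F i (s * u)" "s * u \<in> R"
      using sR by (auto simp: right_diff_distrib fp_mult_left fR R_mult)
    then show ?thesis unfolding I_def by blast
  qed
  have If: "f * x \<in> I" if "x \<in> I" for x using Il that fR by blast
  have relI: "\<forall>i'\<le>m. \<exists>D e. ((*) f ^^ D) (ppow a i') - (\<Sum>k<D. intmul (e k) (((*) f ^^ k) (ppow a i'))) \<in> I"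
  proof (intro allI impI)
    fix i' :: nat
    have "(\<Sum>k<j. intmul (if k = i then 1 else 0) (?F k (ppow a i'))) = (\<Sum>k<j. if k = i then ?F k (ppow a i') else 0)"
      by (intro sum.cong) auto
    also have "\<dots> = ?F i (ppow a i')" using ij by (simp add: sum.delta)
    finally have fin: "?F j (ppow a i') - (\<Sum>k<j. intmul (if k = i then 1 else 0) (?F k (ppow a i'))) \<in> I"
      unfolding I_def using R_ppow by auto
    show "\<exists>D e. ((*) f ^^ D) (ppow a i') - (\<Sum>k<D. intmul (e k) (((*) f ^^ k) (ppow a i'))) \<in> I"
      by (rule exI[of _ j], rule exI[of _ "\<lambda>k. if k = i then 1 else 0"], rule fin)
  qed
  obtain Fin2 where Fin2: "finite Fin2" "Fin2 \<subseteq> R" "\<forall>x\<in>R. \<exists>y\<in>Fin2. x - y \<in> I"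
    using fin_index[OF Isub IR If f relI] by blast
  have "\<forall>x\<in>A. r - x \<notin> I"
  proof (intro ballI notI)
    fix x assume "x \<in> A" "r - x \<in> I"
    then have "(r - x) + x \<in> N" using IN AN Nsub subgrp_add by blast
    then show False using rN by simp
  qed
  then show ?thesis using Isub IR Ir Il Fin2 by blast
qed

end

theorem mainTheorem15:
  fixes a :: "'a::ring" and p :: nat
  assumes "prime p" and "natmul p a = 0"
  shows "finitely_separable (gen_subring a)"
proof -
  interpret msetup a p using assms by (simp add: msetup_def)
  show ?thesis unfolding finitely_separable_def
  proof (intro ballI allI impI)
    fix r A assume r: "r \<in> R" and A: "is_subring A \<and> A \<subseteq> R \<and> r \<notin> A"
    have Asub: "subgrp A" using A by (simp add: is_subring_def subgrp_def)
    have A0: "0 \<in> A" using A by (simp add: is_subring_def)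
    obtain f where fR: "f \<in> R" and f0: "f \<noteq> 0" and fA: "\<And>x. x \<in> A \<Longrightarrow> f * x \<in> A"
    proof (cases "\<exists>f\<in>A. f \<noteq> 0")
      case True
      then obtain f where "f \<in> A" "f \<noteq> 0" by blast
      then show ?thesis using that A by (auto simp: is_subring_def)
    next
      case False
      have "a \<noteq> 0"
      proof
        assume a0: "a = 0"
        have pz: "ppow a k = 0" for k using a0 by (induct k) auto
        have "r = 0" using r by (induct rule: R_induct) (auto simp: pz)
        then show False using A A0 by simp
      qed
      moreover have "a \<in> R" using R_ppow[of 0] by simp
      moreover have "a * x \<in> A" if "x \<in> A" for x using False that A0 by auto
      ultimately show ?thesis using that by blast
    qed
    obtain c n where fc: "f = (\<Sum>k<n. intmul (c k) (ppow a k))" using fR by (auto simp: gen_subring_def)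
    define P where "P = {k. k < n \<and> \<not> int p dvd c k}"
    have Pfin: "finite P" unfolding P_def by auto
    have Pne: "P \<noteq> {}"
    proof
      assume "P = {}"
      then have "f = 0" unfolding fc P_def by (auto intro!: sum.neutral intmul_pdvd R_ppow)
      then show False using f0 by simp
    qed
    define m where "m = Max P"
    have mP: "m < n" "\<not> int p dvd c m" using Max_in[OF Pfin Pne] m_def P_def by auto
    have mabove: "\<forall>k. m < k \<and> k < n \<longrightarrow> int p dvd c k"
    proof (intro allI impI)
      fix k assume k: "m < k \<and> k < n"
      show "int p dvd c k"
      proof (rule ccontr)
        assume "\<not> ?thesis"
        then have "k \<in> P" using k P_def by simp
        then have "k \<le> m" using Max_ge[OF Pfin] m_def by simp
        then show False using k by simp
      qed
    qed
    obtain I Fin where IF: "subgrp I" "I \<subseteq> R" "\<forall>x s. x \<in> I \<longrightarrow> s \<in> R \<longrightarrow> x * s \<in> I"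
      "\<forall>x s. x \<in> I \<longrightarrow> s \<in> R \<longrightarrow> s * x \<in> I" "finite Fin" "Fin \<subseteq> R"
      "\<forall>x\<in>R. \<exists>y\<in>Fin. x - y \<in> I" "\<forall>x\<in>A. r - x \<notin> I"
      using sep_core[OF fc mP mabove Asub _ fA r] A by blast
    show "\<exists>C ad mu z ng \<phi>. finite_ring C ad mu z ng \<and> ring_hom_into \<phi> R C ad mu \<and> \<phi> r \<notin> \<phi> ` A"
      by (rule fin_ring[OF IF(1,2) _ _ IF(5,6,7) _ r IF(8)]) (use IF A in auto)
  qed
qed


end
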